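(* Let $k\in\mathbb N$, $b\geqslant2$, let $\mathbb P$ be a probability measure on $\{0,1,\dots,b-1\}^k$, and let $\mu=\mu_{b,\mathbb P}$. For every $L\in\mathbb N$, \[ \dim_{\ell^1}(\mu)\geqslant\frac{-\log\Big(\displaystyle\sup_{\mathbf x\in\mathbb R^k}b^{-kL}\sum_{i_1,\dots,i_k=0}^{b^L-1}S_L\Big(\mathbf x+\frac{\mathbf i}{b^L}\Big)\Big)}{\log(b^L)}, \] where $\mathbf i=(i_1,\dots,i_k)$.
   Context: The missing-digit measure $\mu_{b,\mathbb P}$ is the distribution of the random variable $\sum_{j=1}^\infty\mathbf d^{(j)}/b^j$, where the $\mathbf d^{(j)}\in\{0,\dots,b-1\}^k$ are i.i.d. with distribution $\mathbb P$. For $\mathbf x\in\mathbb R^k$ define \[ g(\mathbf x)=\Big|\sum_{\mathbf d\in\{0,\dots,b-1\}^k}\mathbb P(\mathbf d)\,e^{2\pi i\,\mathbf d\cdot\mathbf x}\Big|,\qquad S_L(\mathbf x)=\prod_{j=0}^{L-1}g(b^j\mathbf x). \] For a Borel probability measure $\nu$ on $[0,1]^k$, $\hat\nu({\boldsymbol{\xi}})=\int e^{-2\pi i{\boldsymbol{\xi}}\cdot\mathbf x}\,d\nu(\mathbf x)$ and $\dim_{\ell^1}(\nu)=\sup\{s\geqslant0:\sum_{{\boldsymbol{\xi}}\in\mathbb Z^k,\|{\boldsymbol{\xi}}\|_\infty\leqslant Q}|\hat\nu({\boldsymbol{\xi}})|\ll Q^{k-s}\ (Q\geqslant1)\}$.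 *)

theory Defs
  imports "HOL-Probability.Probability"
begin

definition digits :: "nat \<Rightarrow> (nat^'n::finite) set" where
  "digits b = {d. \<forall>i. d$i < b}"

text \<open>The missing-digit measure: law of sum_{j>=1} d^(j) / b^j with d^(j) i.i.d. ~ P.
  The i.i.d. sequence is realised on the infinite product space (index j = 0,1,2,...
  corresponds to the paper's j = 1,2,3,...).\<close>
definition missing_digit_measure :: "nat \<Rightarrow> (nat^'n::finite) pmf \<Rightarrow> (real^'n) measure" where
  "missing_digit_measure b P =
     distr (Pi\<^sub>M (UNIV::nat set) (\<lambda>_. measure_pmf P)) borel
       (\<lambda>\<omega>. \<chi> i. (\<Sum>j. real (\<omega> j $ i) / real b ^ Suc j))"

definition fourier_coeff :: "(real^'n::finite) measure \<Rightarrow> int^'n \<Rightarrow> complex" where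
  "fourier_coeff \<nu> \<xi> = (\<integral>x. cis (- 2 * pi * (\<Sum>i\<in>UNIV. of_int (\<xi>$i) * x$i)) \<partial>\<nu>)"

definition l1_dim :: "(real^'n::finite) measure \<Rightarrow> real" where
  "l1_dim \<nu> = Sup {s. s \<ge> 0 \<and> (\<exists>C. \<forall>Q::real. Q \<ge> 1 \<longrightarrow>
      (\<Sum>\<xi>\<in>{\<xi>::int^'n. \<forall>i. \<bar>of_int (\<xi>$i)\<bar> \<le> Q}. norm (fourier_coeff \<nu> \<xi>))
        \<le> C * Q powr (real CARD('n) - s))}"

definition g_fun :: "nat \<Rightarrow> (nat^'n::finite) pmf \<Rightarrow> real^'n \<Rightarrow> real" where
  "g_fun b P x = norm (\<Sum>d\<in>digits b.
      complex_of_real (pmf P d) * cis (2 * pi * (\<Sum>i\<in>UNIV. real (d$i) * x$i)))"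

definition S_fun :: "nat \<Rightarrow> (nat^'n::finite) pmf \<Rightarrow> nat \<Rightarrow> real^'n \<Rightarrow> real" where
  "S_fun b P L x = (\<Prod>j<L. g_fun b P ((real b ^ j) *\<^sub>R x))"

end

theory Submission
  imports Defs
begin


lemma vec_as_sum: "((\<chi> i. c i) :: real^'n) = (\<Sum>i\<in>UNIV. c i *\<^sub>R axis i (1::real))"
  by (simp add: vec_eq_iff sum_component axis_def if_distrib cong: if_cong)

lemma vec_measurable:
  assumes "\<And>i. (\<lambda>x. f x i) \<in> borel_measurable M"
  shows "(\<lambda>x. (\<chi> i. f x i) :: real^'n) \<in> borel_measurable M"
proof -
  have "(\<lambda>x. (\<chi> i. f x i) :: real^'n) = (\<lambda>x. \<Sum>i\<in>UNIV. f x i *\<^sub>R axis i (1::real))"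
    by (simp add: vec_as_sum)
  also have "\<dots> \<in> borel_measurable M" using assms by measurable
  finally show ?thesis .
qed

definition Xf :: "nat \<Rightarrow> (nat \<Rightarrow> nat^'n::finite) \<Rightarrow> real^'n" where
  "Xf b \<omega> = (\<chi> i. \<Sum>j. real (\<omega> j $ i) / real b ^ Suc j)"

definition dotr :: "real^'n::finite \<Rightarrow> real^'n \<Rightarrow> real" where
  "dotr t y = (\<Sum>i\<in>UNIV. t$i * y$i)"

abbreviation SP :: "(nat^'n::finite) pmf \<Rightarrow> (nat \<Rightarrow> nat^'n) measure" where
  "SP P \<equiv> Pi\<^sub>M (UNIV::nat set) (\<lambda>_. measure_pmf P)"

definition hF :: "nat \<Rightarrow> (nat^'n::finite) pmf \<Rightarrow> real^'n \<Rightarrow> complex" where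
  "hF b P t = (\<integral>\<omega>. cis (- 2 * pi * dotr t (Xf b \<omega>)) \<partial>SP P)"

lemma seqsp: "sequence_space (measure_pmf P)"
  unfolding sequence_space_def product_prob_space_def product_prob_space_axioms_def
    product_sigma_finite_def
  by (auto intro: prob_space_measure_pmf prob_space_imp_sigma_finite)

lemma Xf_meas: "Xf b \<in> borel_measurable (SP P)"
  unfolding Xf_def
  by (rule vec_measurable) measurable

lemma AE_good: "AE \<omega> in SP P. \<forall>j. \<omega> j \<in> set_pmf P"
  unfolding AE_all_countable
  by (intro allI AE_PiM_component) (auto intro: prob_space_measure_pmf AE_measure_pmf)

lemma summ_digits:
  assumes "b \<ge> 2" "\<And>j. \<nu> j \<in> digits b"
  shows "summable (\<lambda>j. real (\<nu> j $ i) / real b ^ Suc j)"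
proof (rule summable_comparison_test[of _ "\<lambda>j. (1 / real b) ^ j"])
  show "\<exists>N. \<forall>n\<ge>N. norm (real (\<nu> n $ i) / real b ^ Suc n) \<le> (1 / real b) ^ n"
  proof (intro exI allI impI)
    fix n
    have "\<nu> n $ i < b" using assms(2)[of n] by (auto simp: digits_def)
    hence "real (\<nu> n $ i) \<le> real b" by simp
    hence "real (\<nu> n $ i) / real b ^ Suc n \<le> real b / real b ^ Suc n"
      by (intro divide_right_mono) auto
    also have "\<dots> = (1 / real b) ^ n" using assms(1) by (simp add: power_divide)
    finally show "norm (real (\<nu> n $ i) / real b ^ Suc n) \<le> (1 / real b) ^ n" by simp
  qed
  show "summable (\<lambda>j. (1 / real b) ^ j)" using assms(1) by (intro summable_geometric) auto
qed

lemma Xf_case: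
  assumes b: "b \<ge> 2" and sub: "set_pmf P \<subseteq> digits b"
    and om: "\<forall>j. \<omega> j \<in> set_pmf P" and s: "s \<in> set_pmf P"
  shows "dotr t (Xf b (case_nat s \<omega>)) =
     (\<Sum>i\<in>UNIV. real (s$i) * ((1/real b) *\<^sub>R t)$i) + dotr ((1/real b) *\<^sub>R t) (Xf b \<omega>)"
proof -
  have comp: "Xf b (case_nat s \<omega>) $ i = real (s$i) / real b + (1 / real b) * Xf b \<omega> $ i" for i
  proof -
    let ?f = "\<lambda>j. real (case_nat s \<omega> j $ i) / real b ^ Suc j"
    have "summable ?f"
      by (rule summ_digits[OF b]) (use om s sub in \<open>auto split: nat.split\<close>)
    hence "(\<Sum>n. ?f (Suc n)) = suminf ?f - ?f 0"
      by (rule suminf_split_head)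
    hence "suminf ?f = ?f 0 + (\<Sum>n. ?f (Suc n))"
      by linarith
    also have "(\<Sum>n. ?f (Suc n)) = (\<Sum>n. (1/real b) * (real (\<omega> n $ i) / real b ^ Suc n))"
      by (simp add: field_simps)
    also have "\<dots> = (1/real b) * (\<Sum>n. real (\<omega> n $ i) / real b ^ Suc n)"
      by (rule suminf_mult) (rule summ_digits[OF b], use om sub in auto)
    finally show ?thesis by (simp add: Xf_def)
  qed
  show ?thesis
    by (simp add: dotr_def comp distrib_left sum.distrib algebra_simps sum_distrib_left)
qed

lemma finite_vecset: assumes A: "finite A" shows "finite {v::'a^'n::finite. \<forall>i. v$i \<in> A}"
proof -
  have "{v::'a^'n. \<forall>i. v$i \<in> A} = vec_nth -` (PiE UNIV (\<lambda>_. A))"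
    by (auto simp: PiE_iff)
  moreover have "inj vec_nth" by (auto simp: inj_def vec_eq_iff)
  ultimately show ?thesis using A by (auto intro!: finite_vimageI finite_PiE)
qed

lemma card_vecset: assumes A: "finite A" shows "card {v::'a^'n::finite. \<forall>i. v$i \<in> A} = card A ^ CARD('n)"
proof -
  have "{v::'a^'n. \<forall>i. v$i \<in> A} = vec_nth -` (PiE UNIV (\<lambda>_. A))"
    by (auto simp: PiE_iff)
  moreover have "inj vec_nth" by (auto simp: inj_def vec_eq_iff)
  moreover have "PiE UNIV (\<lambda>_. A) \<subseteq> range (vec_nth :: 'a^'n \<Rightarrow> _)"
  proof
    fix f assume "f \<in> PiE (UNIV::'n set) (\<lambda>_. A)"
    have "f = vec_nth (vec_lambda f)" by (simp add: vec_lambda_inverse)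
    thus "f \<in> range vec_nth" by blast
  qed
  ultimately have "card {v::'a^'n. \<forall>i. v$i \<in> A} = card (PiE (UNIV::'n set) (\<lambda>_. A))"
    by (metis card_vimage_inj)
  thus ?thesis using A by (simp add: card_PiE)
qed

lemma finite_digits: "finite (digits b :: (nat^'n::finite) set)"
  unfolding digits_def using finite_vecset[of "{..<b}"] by simp

lemma card_digits: "card (digits b :: (nat^'n::finite) set) = b ^ CARD('n)"
  unfolding digits_def using card_vecset[of "{..<b}"] by simp

lemma cis_meas: "(\<lambda>y. cis (- 2 * pi * dotr t y)) \<in> borel_measurable (borel :: (real^'n::finite) measure)"
  unfolding dotr_def
  by (intro borel_measurable_continuous_onI continuous_intros)

lemma cisdiff: "cis (- x - y) = cis (-x) * cis (-y)" by (simp add: cis_mult)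

lemma hF_rec:
  fixes t :: "real^'n::finite" and P :: "(nat^'n) pmf"
  assumes b: "b \<ge> 2" and sub: "set_pmf P \<subseteq> digits b"
  shows "hF b P t = (\<Sum>d\<in>digits b. of_real (pmf P d) *
      cis (- 2 * pi * (\<Sum>i\<in>UNIV. real (d$i) * ((1/real b) *\<^sub>R t)$i))) * hF b P ((1/real b) *\<^sub>R t)"
proof -
  interpret sequence_space "measure_pmf P" by (rule seqsp)
  let ?M = "measure_pmf P"
  let ?S = "SP P"
  let ?u = "(1/real b) *\<^sub>R t"
  let ?F = "\<lambda>t \<omega>. cis (- 2 * pi * dotr t (Xf b \<omega>))"
  let ?c = "\<lambda>s::nat^'n. cis (- 2 * pi * (\<Sum>i\<in>UNIV. real (s$i) * ?u$i))"
  interpret PS: pair_sigma_finite ?M ?S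
    unfolding pair_sigma_finite_def
    by (auto intro: prob_space_imp_sigma_finite prob_space_measure_pmf prob_space_PiM)
  interpret PP: prob_space "?M \<Otimes>\<^sub>M ?S"
    by (intro prob_space_pair prob_space_measure_pmf prob_space_PiM)
  have Fm: "?F t' \<in> borel_measurable ?S" for t'
    using measurable_compose[OF Xf_meas cis_meas] by (simp add: comp_def)
  have fm: "(\<lambda>(s, \<omega>). case_nat s \<omega>) \<in> measurable (?M \<Otimes>\<^sub>M ?S) ?S"
    by measurable
  have "hF b P t = integral\<^sup>L ?S (?F t)" by (simp add: hF_def)
  also have "\<dots> = integral\<^sup>L (distr (?M \<Otimes>\<^sub>M ?S) ?S (\<lambda>(s, \<omega>). case_nat s \<omega>)) (?F t)"
    by (simp add: PiM_iter)
  also have "\<dots> = (\<integral>x. ?F t (case_prod case_nat x) \<partial>(?M \<Otimes>\<^sub>M ?S))"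
    by (rule integral_distr[OF fm Fm])
  also have "\<dots> = (\<integral>s. \<integral>\<omega>. ?F t (case_nat s \<omega>) \<partial>?S \<partial>?M)"
  proof -
    have mm: "(\<lambda>x. ?F t (case_prod case_nat x)) \<in> borel_measurable (?M \<Otimes>\<^sub>M ?S)"
      by (rule measurable_compose[OF fm Fm])
    have int: "integrable (?M \<Otimes>\<^sub>M ?S) (\<lambda>x. ?F t (case_prod case_nat x))"
      by (rule PP.integrable_const_bound[where B=1, OF _ mm]) auto
    show ?thesis using PS.integral_fst'[OF int] by simp
  qed
  also have "\<dots> = (\<integral>s. ?c s * hF b P ?u \<partial>?M)"
  proof (rule integral_cong_AE)
    show "AE s in ?M. (\<integral>\<omega>. ?F t (case_nat s \<omega>) \<partial>?S) = ?c s * hF b P ?u"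
    proof (rule AE_mp[OF AE_measure_pmf], intro AE_I2 impI)
      fix s assume s: "s \<in> set_pmf P"
      have "(\<integral>\<omega>. ?F t (case_nat s \<omega>) \<partial>?S) = (\<integral>\<omega>. ?c s * ?F ?u \<omega> \<partial>?S)"
      proof (rule integral_cong_AE)
        show "AE \<omega> in ?S. ?F t (case_nat s \<omega>) = ?c s * ?F ?u \<omega>"
          using AE_good[of P]
          by eventually_elim (simp add: Xf_case[OF b sub _ s] distrib_left cisdiff)
      next
        show "(\<lambda>\<omega>. ?F t (case_nat s \<omega>)) \<in> borel_measurable ?S"
          by (rule measurable_compose[OF _ Fm]) measurable
      next
        show "(\<lambda>\<omega>. ?c s * ?F ?u \<omega>) \<in> borel_measurable ?S"
          using Fm[of ?u] by measurable
      qed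
      also have "\<dots> = ?c s * hF b P ?u" by (simp add: hF_def)
      finally show "(\<integral>\<omega>. ?F t (case_nat s \<omega>) \<partial>?S) = ?c s * hF b P ?u" .
    qed
  qed auto
  also have "\<dots> = (\<Sum>s\<in>digits b. pmf P s *\<^sub>R (?c s * hF b P ?u))"
    by (rule integral_measure_pmf[OF finite_digits]) (use sub in auto)
  also have "\<dots> = (\<Sum>s\<in>digits b. of_real (pmf P s) * ?c s) * hF b P ?u"
    by (simp add: sum_distrib_right scaleR_conv_of_real mult.assoc)
  finally show ?thesis .
qed

lemma g_alt: "g_fun b P x = norm (\<Sum>d\<in>digits b. of_real (pmf P d) *
      cis (- 2 * pi * (\<Sum>i\<in>UNIV. real (d$i) * x$i)))"
proof -
  have eq: "(\<Sum>d\<in>digits b. of_real (pmf P d) * cis (- 2 * pi * (\<Sum>i\<in>UNIV. real (d$i) * x$i)))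
     = cnj (\<Sum>d\<in>digits b. of_real (pmf P d) * cis (2 * pi * (\<Sum>i\<in>UNIV. real (d$i) * x$i)))"
    by (simp add: cis_cnj)
  show ?thesis unfolding g_fun_def eq by (rule complex_mod_cnj[symmetric])
qed

lemma g_nonneg: "g_fun b P x \<ge> 0" by (simp add: g_fun_def)

lemma g_le1:
  assumes sub: "set_pmf P \<subseteq> digits b"
  shows "g_fun b P x \<le> 1"
proof -
  have "g_fun b P x \<le> (\<Sum>d\<in>digits b. norm (of_real (pmf P d) * cis (2 * pi * (\<Sum>i\<in>UNIV. real (d$i) * x$i))))"
    unfolding g_fun_def by (rule norm_sum)
  also have "\<dots> = (\<Sum>d\<in>digits b. pmf P d)" by (simp add: norm_mult)
  also have "\<dots> = 1" by (rule sum_pmf_eq_1[OF finite_digits sub])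
  finally show ?thesis .
qed

lemma g_zero:
  assumes sub: "set_pmf P \<subseteq> digits b"
  shows "g_fun b P 0 = 1"
  using sum_pmf_eq_1[OF finite_digits sub] by (simp add: g_fun_def flip: of_real_sum)

lemma S_nonneg: "S_fun b P N x \<ge> 0"
  by (simp add: S_fun_def prod_nonneg g_nonneg)

lemma S_le1: "set_pmf P \<subseteq> digits b \<Longrightarrow> S_fun b P N x \<le> 1"
  unfolding S_fun_def by (rule prod_le_1) (auto simp: g_nonneg g_le1)

lemma S_zero: "set_pmf P \<subseteq> digits b \<Longrightarrow> S_fun b P N 0 = 1"
  by (simp add: S_fun_def g_zero)

lemma g_periodic:
  assumes "\<forall>i. v$i \<in> \<int>"
  shows "g_fun b P (x + v) = g_fun b P x"
proof -
  have "cis (2 * pi * (\<Sum>i\<in>UNIV. real (d$i) * (x + v)$i)) = cis (2 * pi * (\<Sum>i\<in>UNIV. real (d$i) * x$i))"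
    for d :: "nat^'a"
  proof -
    have I: "(\<Sum>i\<in>UNIV. real (d$i) * v$i) \<in> \<int>" using assms by (intro Ints_sum Ints_mult) auto
    have "(\<Sum>i\<in>UNIV. real (d$i) * (x + v)$i) = (\<Sum>i\<in>UNIV. real (d$i) * x$i) + (\<Sum>i\<in>UNIV. real (d$i) * v$i)"
      by (simp add: distrib_left sum.distrib)
    hence "cis (2 * pi * (\<Sum>i\<in>UNIV. real (d$i) * (x + v)$i)) = cis (2 * pi * (\<Sum>i\<in>UNIV. real (d$i) * x$i)) * cis (2 * pi * (\<Sum>i\<in>UNIV. real (d$i) * v$i))"
      by (simp add: cis_mult distrib_left)
    thus ?thesis using I by simp
  qed
  thus ?thesis by (simp add: g_fun_def)
qed

lemma S_periodic:
  assumes "\<forall>i. v$i \<in> \<int>"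
  shows "S_fun b P N (x + v) = S_fun b P N x"
proof -
  have "g_fun b P (real b ^ j *\<^sub>R (x + v)) = g_fun b P (real b ^ j *\<^sub>R x)" for j
  proof -
    have "real b ^ j *\<^sub>R (x + v) = real b ^ j *\<^sub>R x + real b ^ j *\<^sub>R v" by (simp add: scaleR_add_right)
    moreover have "\<forall>i. (real b ^ j *\<^sub>R v)$i \<in> \<int>" using assms by (auto intro: Ints_mult)
    ultimately show ?thesis by (simp add: g_periodic)
  qed
  thus ?thesis by (simp add: S_fun_def)
qed

lemma hF_le1: "norm (hF b P t) \<le> 1"
proof -
  interpret prob_space "SP P" by (intro prob_space_PiM prob_space_measure_pmf)
  have "norm (hF b P t) \<le> (\<integral>\<omega>. norm (cis (- 2 * pi * dotr t (Xf b \<omega>))) \<partial>SP P)"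
    unfolding hF_def by (rule integral_norm_bound)
  also have "\<dots> = 1" by (simp add: prob_space)
  finally show ?thesis .
qed

lemma hF_bound:
  fixes t :: "real^'n::finite" and P :: "(nat^'n) pmf"
  assumes b: "b \<ge> 2" and sub: "set_pmf P \<subseteq> digits b"
  shows "norm (hF b P t) \<le> S_fun b P N ((1 / real b ^ N) *\<^sub>R t)"
proof (induction N arbitrary: t)
  case 0
  then show ?case using hF_le1[of b P t] by (simp add: S_fun_def)
next
  case (Suc N)
  let ?u = "(1/real b) *\<^sub>R t"
  have "norm (hF b P t) = g_fun b P ?u * norm (hF b P ?u)"
    by (subst hF_rec[OF b sub]) (simp add: norm_mult g_alt)
  also have "\<dots> \<le> g_fun b P ?u * S_fun b P N ((1 / real b ^ N) *\<^sub>R ?u)"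
    by (intro mult_left_mono Suc g_nonneg)
  also have "\<dots> = S_fun b P (Suc N) ((1 / real b ^ Suc N) *\<^sub>R t)"
  proof -
    have e1: "real b ^ N *\<^sub>R ((1 / real b ^ Suc N) *\<^sub>R t) = ?u" using b by simp
    have e2: "real b ^ j *\<^sub>R ((1 / real b ^ N) *\<^sub>R ?u) = real b ^ j *\<^sub>R ((1 / real b ^ Suc N) *\<^sub>R t)" for j
      by (simp add: field_simps)
    show ?thesis unfolding S_fun_def by (simp add: e1 e2 mult.commute)
  qed
  finally show ?case .
qed

lemma md_eq: "missing_digit_measure b P = distr (SP P) borel (Xf b)"
proof -
  have "(\<lambda>\<omega>. \<chi> i. (\<Sum>j. real (\<omega> j $ i) / real b ^ Suc j)) = Xf b"
    by (rule ext) (simp add: Xf_def)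
  thus ?thesis unfolding missing_digit_measure_def by (rule arg_cong)
qed

lemma fourier_hF:
  "fourier_coeff (missing_digit_measure b P) \<xi> = hF b P (\<chi> i. of_int (\<xi>$i))"
proof -
  have "fourier_coeff (missing_digit_measure b P) \<xi> =
     (\<integral>x. cis (- 2 * pi * dotr (\<chi> i. of_int (\<xi>$i)) x) \<partial>distr (SP P) borel (Xf b))"
    by (simp add: fourier_coeff_def md_eq dotr_def)
  also have "\<dots> = hF b P (\<chi> i. of_int (\<xi>$i))"
    unfolding hF_def by (rule integral_distr[OF Xf_meas cis_meas])
  finally show ?thesis .
qed



definition vr :: "nat^'n::finite \<Rightarrow> real^'n" where "vr i = (\<chi> j. real (i$j))"

lemma digits_split:
  fixes f :: "nat^'n::finite \<Rightarrow> 'b::comm_monoid_add"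
  assumes B: "B > 0"
  shows "(\<Sum>i\<in>digits (B*C). f i) = (\<Sum>a\<in>digits B. \<Sum>c\<in>digits C. f (\<chi> j. a$j + B * c$j))"
proof -
  let ?h = "\<lambda>(a::nat^'n, c::nat^'n). (\<chi> j. a$j + B * c$j)"
  let ?h' = "\<lambda>i::nat^'n. ((\<chi> j. i$j mod B), (\<chi> j. i$j div B))"
  have bij: "bij_betw ?h (digits B \<times> digits C) (digits (B*C))"
  proof (rule bij_betw_byWitness[where f' = ?h'])
    show "\<forall>p\<in>digits B \<times> digits C. ?h' (?h p) = p"
      using B by (auto simp: digits_def vec_eq_iff)
    show "\<forall>i\<in>digits (B*C). ?h (?h' i) = i"
      by (auto simp: digits_def vec_eq_iff)
    show "?h ` (digits B \<times> digits C) \<subseteq> digits (B*C)"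
    proof (auto simp: digits_def)
      fix a c :: "nat^'n" and j
      assume "\<forall>i. a$i < B" "\<forall>i. c$i < C"
      hence "a$j < B" "c$j < C" by auto
      hence "a$j < B" "c$j + 1 \<le> C" by auto
      hence "a$j + B * c$j < B + B * c$j" by simp
      also have "\<dots> = B * (c$j + 1)" by simp
      also have "\<dots> \<le> B * C" using \<open>c$j + 1 \<le> C\<close> by (rule mult_le_mono2)
      finally show "a$j + B * c$j < B * C" .
    qed
    show "?h' ` digits (B*C) \<subseteq> digits B \<times> digits C"
      using B by (auto simp: digits_def less_mult_imp_div_less mult.commute)
  qed
  have "(\<Sum>i\<in>digits (B*C). f i) = (\<Sum>p\<in>digits B \<times> digits C. f (?h p))"
    using sum.reindex_bij_betw[OF bij, of f] by simp
  also have "\<dots> = (\<Sum>a\<in>digits B. \<Sum>c\<in>digits C. f (?h (a, c)))"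
    by (subst sum.cartesian_product) (auto intro!: sum.cong)
  finally show ?thesis by simp
qed

lemma prod_split_add: "(\<Prod>j<L+(N::nat). (f j :: 'a::comm_monoid_mult)) = (\<Prod>j<L. f j) * (\<Prod>j<N. f (L + j))"
  by (induction N) (simp_all add: mult.assoc)

lemma S_split: "S_fun b P (L + N) x = S_fun b P L x * S_fun b P N (real b ^ L *\<^sub>R x)"
  unfolding S_fun_def prod_split_add by (simp add: power_add mult.commute)

lemma claim:
  fixes P :: "(nat^'n::finite) pmf"
  assumes b: "b \<ge> 2" and sub: "set_pmf P \<subseteq> digits b"
    and Ab: "\<And>y. (\<Sum>i\<in>digits (b^L). S_fun b P L (y + (1/real b^L) *\<^sub>R vr i)) \<le> K"
    and K: "K \<ge> 0"
  shows "(\<Sum>i\<in>digits (b^(L*M)). S_fun b P (L*M) (y + (1/real b^(L*M)) *\<^sub>R vr i)) \<le> K^M"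
proof (induction M arbitrary: y)
  case 0
  have "digits (1::nat) = {0::nat^'n}" by (auto simp: digits_def vec_eq_iff)
  then show ?case by (simp add: S_fun_def)
next
  case (Suc M)
  define D1 where "D1 = real b ^ (L*M)"
  define D2 where "D2 = real b ^ L"
  have D1: "D1 > 0" and D2: "D2 > 0" using b by (auto simp: D1_def D2_def)
  have eqb: "b^(L * Suc M) = b^(L*M) * b^L" by (simp add: power_add)
  have eqr: "real b ^ (L * Suc M) = D1 * D2" by (simp add: D1_def D2_def power_add)
  have eqr2: "real b ^ (L + L * M) = D1 * D2" by (simp add: D1_def D2_def power_add)
  let ?T = "\<lambda>a. S_fun b P (L*M) (real b ^ L *\<^sub>R y + (1/D1) *\<^sub>R vr a)"
  let ?y = "\<lambda>a. y + (1/(D1*D2)) *\<^sub>R vr a"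
  have trm: "S_fun b P (L * Suc M) (y + (1/real b^(L * Suc M)) *\<^sub>R vr (\<chi> j. a$j + b^(L*M) * c$j))
      = S_fun b P L (?y a + (1/real b^L) *\<^sub>R vr c) * ?T a" for a c :: "nat^'n"
  proof -
    let ?x = "y + (1/real b^(L * Suc M)) *\<^sub>R vr (\<chi> j. a$j + b^(L*M) * c$j)"
    have x1: "?x = ?y a + (1/real b^L) *\<^sub>R vr c"
      using D1 D2 by (simp add: eqr eqr2 vec_eq_iff vr_def D1_def[symmetric] D2_def[symmetric] field_simps)
    have x2: "real b ^ L *\<^sub>R ?x = (real b ^ L *\<^sub>R y + (1/D1) *\<^sub>R vr a) + vr c"
      using D1 D2 by (simp add: eqr eqr2 vec_eq_iff vr_def D1_def[symmetric] D2_def[symmetric] field_simps)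
    have "S_fun b P (L * Suc M) ?x = S_fun b P (L + L*M) ?x" by simp
    also have "\<dots> = S_fun b P L ?x * S_fun b P (L*M) (real b ^ L *\<^sub>R ?x)" by (rule S_split)
    also have "S_fun b P (L*M) (real b ^ L *\<^sub>R ?x) = ?T a"
      unfolding x2 by (rule S_periodic) (simp add: vr_def)
    finally show ?thesis unfolding x1 .
  qed
  have "(\<Sum>i\<in>digits (b^(L * Suc M)). S_fun b P (L * Suc M) (y + (1/real b^(L * Suc M)) *\<^sub>R vr i))
     = (\<Sum>a\<in>digits (b^(L*M)). \<Sum>c\<in>digits (b^L). S_fun b P L (?y a + (1/real b^L) *\<^sub>R vr c) * ?T a)"
  proof -
    have "(\<Sum>i\<in>digits (b^(L*M) * b^L). S_fun b P (L * Suc M) (y + (1/real b^(L * Suc M)) *\<^sub>R vr i))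
      = (\<Sum>a\<in>digits (b^(L*M)). \<Sum>c\<in>digits (b^L). S_fun b P (L * Suc M) (y + (1/real b^(L * Suc M)) *\<^sub>R vr (\<chi> j. a$j + b^(L*M) * c$j)))"
      by (rule digits_split) (use b in simp)
    also have "\<dots> = (\<Sum>a\<in>digits (b^(L*M)). \<Sum>c\<in>digits (b^L). S_fun b P L (?y a + (1/real b^L) *\<^sub>R vr c) * ?T a)"
      by (intro sum.cong refl trm)
    finally show ?thesis unfolding eqb .
  qed
  also have "\<dots> = (\<Sum>a\<in>digits (b^(L*M)). (\<Sum>c\<in>digits (b^L). S_fun b P L (?y a + (1/real b^L) *\<^sub>R vr c)) * ?T a)"
    by (simp add: sum_distrib_right)
  also have "\<dots> \<le> (\<Sum>a\<in>digits (b^(L*M)). K * ?T a)"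
    by (intro sum_mono mult_right_mono Ab S_nonneg)
  also have "\<dots> = K * (\<Sum>a\<in>digits (b^(L*M)). ?T a)" by (simp add: sum_distrib_left)
  also have "\<dots> \<le> K * K^M"
    using Suc[of "real b ^ L *\<^sub>R y"] K by (intro mult_left_mono) (simp_all add: D1_def)
  finally show ?case by simp
qed

lemma div_range:
  fixes x D :: int
  assumes "D > 0" "-D < x" "x < D"
  shows "x div D \<in> {-1, 0}"
proof -
  have e: "x = D * (x div D) + x mod D" by simp
  have r: "0 \<le> x mod D" "x mod D < D" using assms(1) by auto
  have "D * (x div D) < D * 1" using e r assms by linarith
  hence "x div D < 1" using assms(1) by (simp add: mult_less_cancel_left_pos)
  moreover have "D * (-2) < D * (x div D)" using e r assms by linarith
  hence "-2 < x div D" using assms(1) mult_less_cancel_left_pos by blast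
  ultimately show ?thesis by auto
qed

lemma box_count:
  fixes F :: "nat^'n::finite \<Rightarrow> real" and B :: "(int^'n) set"
  assumes D: "D > 0" and F: "\<And>a. F a \<ge> 0" and fin: "finite B"
    and Bb: "\<And>\<xi> j. \<xi> \<in> B \<Longrightarrow> - int D < \<xi>$j \<and> \<xi>$j < int D"
  shows "(\<Sum>\<xi>\<in>B. F (\<chi> j. nat (\<xi>$j mod int D))) \<le> 2 ^ CARD('n) * (\<Sum>a\<in>digits D. F a)"
proof -
  let ?rr = "\<lambda>\<xi>::int^'n. (\<chi> j. nat (\<xi>$j mod int D)) :: nat^'n"
  let ?qq = "\<lambda>\<xi>::int^'n. (\<chi> j. \<xi>$j div int D) :: int^'n"
  let ?phi = "\<lambda>\<xi>. (?rr \<xi>, ?qq \<xi>)"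
  define Qs where "Qs = {q::int^'n. \<forall>j. q$j \<in> {-1, 0}}"
  have finQ: "finite Qs" unfolding Qs_def by (rule finite_vecset) simp
  have cardQ: "card Qs = 2 ^ CARD('n)" unfolding Qs_def by (subst card_vecset) (auto simp: numeral_2_eq_2)
  have inj: "inj_on ?phi B"
  proof (rule inj_onI)
    fix x y assume "?phi x = ?phi y"
    hence "\<forall>j. x$j mod int D = y$j mod int D \<and> x$j div int D = y$j div int D"
      using D by (auto simp: vec_eq_iff eq_nat_nat_iff)
    thus "x = y" by (metis vec_eq_iff div_mult_mod_eq)
  qed
  have sub: "?phi ` B \<subseteq> digits D \<times> Qs"
  proof
    fix p assume "p \<in> ?phi ` B"
    then obtain \<xi> where \<xi>: "\<xi> \<in> B" "p = ?phi \<xi>" by auto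
    have "?rr \<xi> \<in> digits D" using D by (auto simp: digits_def nat_less_iff)
    moreover have "?qq \<xi> \<in> Qs"
    proof -
      have "\<xi>$j div int D \<in> {-1, 0}" for j
        using Bb[OF \<xi>(1), of j] D by (intro div_range) auto
      thus ?thesis unfolding Qs_def by simp
    qed
    ultimately show "p \<in> digits D \<times> Qs" using \<xi> by auto
  qed
  have "(\<Sum>\<xi>\<in>B. F (?rr \<xi>)) = (\<Sum>p\<in>?phi ` B. F (fst p))"
    by (subst sum.reindex[OF inj]) simp
  also have "\<dots> \<le> (\<Sum>p\<in>digits D \<times> Qs. F (fst p))"
    by (rule sum_mono2) (auto simp: finite_digits finQ sub F)
  also have "\<dots> = (\<Sum>a\<in>digits D. \<Sum>q\<in>Qs. F a)"
    by (subst sum.cartesian_product) (auto intro!: sum.cong)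
  also have "\<dots> = 2 ^ CARD('n) * (\<Sum>a\<in>digits D. F a)"
    by (simp add: cardQ sum_distrib_left)
  finally show ?thesis .
qed



lemma fourier_sum_bound:
  fixes P :: "(nat^'n::finite) pmf" and Q \<sigma> s :: real
  assumes b: "b \<ge> 2" and sub: "set_pmf P \<subseteq> digits b" and L: "L \<ge> 1" and \<sigma>: "\<sigma> > 0"
    and A\<sigma>: "\<And>y. (\<Sum>i\<in>digits (b^L). S_fun b P L (y + (1/real b^L) *\<^sub>R vr i)) \<le> (real b^L)^CARD('n) * \<sigma>"
    and Q: "Q \<ge> 1" and s0: "s \<ge> 0" and sdef: "s = - ln \<sigma> / ln (real b ^ L)"
  shows "(\<Sum>\<xi>\<in>{\<xi>::int^'n. \<forall>i. \<bar>of_int (\<xi>$i)\<bar> \<le> Q}. norm (fourier_coeff (missing_digit_measure b P) \<xi>))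
     \<le> (2 ^ CARD('n) * (real b^L)^CARD('n)) * Q powr (real CARD('n) - s)"
proof (cases "finite {\<xi>::int^'n. \<forall>i. \<bar>of_int (\<xi>$i)\<bar> \<le> Q}")
  case False
  then show ?thesis by simp
next
  case True
  define Box where "Box = {\<xi>::int^'n. \<forall>i. \<bar>of_int (\<xi>$i)\<bar> \<le> Q}"
  define \<beta> where "\<beta> = real b ^ L"
  define k where "k = CARD('n)"
  have \<beta>1: "\<beta> > 1" using b L unfolding \<beta>_def by (metis one_less_power of_nat_1 of_nat_less_iff less_le_trans one_less_numeral_iff semiring_norm(76) not_one_le_zero le_neq_implies_less le0 not_less_eq_eq numeral_le_iff num.exhaust) 
  obtain M1 where "Q < \<beta> ^ M1" using real_arch_pow[OF \<beta>1] by blast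
  define M where "M = (LEAST M. Q < \<beta> ^ M)"
  have QM: "Q < \<beta> ^ M" unfolding M_def by (rule LeastI) fact
  have M0: "M \<noteq> 0"
  proof
    assume "M = 0"
    with QM Q show False by simp
  qed
  have QM1: "\<beta> ^ (M - 1) \<le> Q"
  proof -
    have "\<not> Q < \<beta> ^ (M - 1)" unfolding M_def by (rule not_less_Least) (use M0 M_def in auto)
    thus ?thesis by simp
  qed
  define D where "D = b ^ (L*M)"
  have D0: "D > 0" using b by (simp add: D_def)
  have Dr: "real D = \<beta> ^ M" by (simp add: D_def \<beta>_def power_mult)
  let ?F = "\<lambda>a. S_fun b P (L*M) ((1/real D) *\<^sub>R vr a)"
  let ?rr = "\<lambda>\<xi>::int^'n. (\<chi> j. nat (\<xi>$j mod int D)) :: nat^'n"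
  have pt: "norm (fourier_coeff (missing_digit_measure b P) \<xi>) \<le> ?F (?rr \<xi>)" for \<xi>
  proof -
    let ?xr = "(\<chi> i. of_int (\<xi>$i)) :: real^'n"
    have "norm (fourier_coeff (missing_digit_measure b P) \<xi>) \<le> S_fun b P (L*M) ((1 / real b ^ (L*M)) *\<^sub>R ?xr)"
      unfolding fourier_hF by (rule hF_bound[OF b sub])
    also have "(1 / real b ^ (L*M)) *\<^sub>R ?xr = (1/real D) *\<^sub>R vr (?rr \<xi>) + (\<chi> j. of_int (\<xi>$j div int D))"
    proof -
      have "of_int (\<xi>$j) / real D = real (nat (\<xi>$j mod int D)) / real D + of_int (\<xi>$j div int D)" for j
      proof -
        have m: "real (nat (\<xi>$j mod int D)) = of_int (\<xi>$j mod int D)" using D0 by simp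
        have "\<xi>$j = \<xi>$j mod int D + int D * (\<xi>$j div int D)" by simp
        hence h: "real_of_int (\<xi>$j) = real_of_int (\<xi>$j mod int D) + real D * real_of_int (\<xi>$j div int D)"
          by (metis of_int_add of_int_mult of_int_of_nat_eq)
        show ?thesis unfolding m h using D0 by (simp add: field_simps)
      qed
      thus ?thesis by (simp add: vec_eq_iff vr_def D_def)
    qed
    also have "S_fun b P (L*M) \<dots> = ?F (?rr \<xi>)" by (rule S_periodic) simp
    finally show ?thesis .
  qed
  have inB: "- int D < \<xi>$j \<and> \<xi>$j < int D" if "\<xi> \<in> Box" for \<xi> j
  proof -
    have "\<bar>of_int (\<xi>$j)\<bar> \<le> Q" using that by (simp add: Box_def)
    hence "\<bar>of_int (\<xi>$j)\<bar> < real D" using QM Dr by simp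
    hence "\<bar>\<xi>$j\<bar> < int D" by linarith
    thus ?thesis by auto
  qed
  have "(\<Sum>\<xi>\<in>Box. norm (fourier_coeff (missing_digit_measure b P) \<xi>)) \<le> (\<Sum>\<xi>\<in>Box. ?F (?rr \<xi>))"
    by (rule sum_mono) (rule pt)
  also have "\<dots> \<le> 2 ^ k * (\<Sum>a\<in>digits D. ?F a)"
    unfolding k_def by (rule box_count[OF D0 S_nonneg]) (use True inB in \<open>auto simp: Box_def\<close>)
  also have "(\<Sum>a\<in>digits D. ?F a) \<le> ((real b^L)^CARD('n) * \<sigma>)^M"
    using claim[OF b sub A\<sigma>, of M 0] \<sigma> by (simp add: D_def)
  also have "((real b^L)^CARD('n) * \<sigma>)^M = \<beta>^k * (\<beta>^(M-1))^k * \<sigma>^M"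
  proof -
    have "M = Suc (M - 1)" using M0 by simp
    hence "(\<beta>^k)^M = \<beta>^k * (\<beta>^(M-1))^k"
      by (metis power_Suc power_mult mult.commute)
    thus ?thesis by (simp add: \<beta>_def k_def power_mult_distrib)
  qed
  also have "\<dots> \<le> \<beta>^k * Q^k * Q powr (- s)"
  proof -
    have "\<beta> powr (- s) = \<sigma>"
    proof -
      have "ln \<beta> > 0" using \<beta>1 by simp
      hence "- s * ln \<beta> = ln \<sigma>" unfolding sdef \<beta>_def[symmetric] by simp
      thus ?thesis using \<beta>1 \<sigma> by (simp add: powr_def)
    qed
    hence "\<sigma>^M = (\<beta>^M) powr (- s)" using \<beta>1
      by (metis powr_power powr_powr powr_realpow less_trans zero_less_one not_one_less_zero
          mult.commute of_nat_0_less_iff less_numeral_extra(3) zero_less_power)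
    also have "\<dots> \<le> Q powr (- s)" using s0 Q QM by (intro powr_mono2') auto
    finally have 1: "\<sigma>^M \<le> Q powr (- s)" .
    have 2: "(\<beta>^(M-1))^k \<le> Q^k" using QM1 \<beta>1 by (intro power_mono) auto
    show ?thesis using 1 2 \<beta>1 \<sigma> Q
      by (intro mult_mono) (auto intro!: mult_nonneg_nonneg)
  qed
  also have "\<beta>^k * Q^k * Q powr (- s) = \<beta>^k * Q powr (real k - s)"
    using Q by (simp add: powr_diff powr_realpow divide_inverse powr_minus)
  finally have "(\<Sum>\<xi>\<in>Box. norm (fourier_coeff (missing_digit_measure b P) \<xi>)) \<le> 2 ^ k * (\<beta>^k * Q powr (real k - s))"
    by (simp add: mult_left_mono)
  thus ?thesis by (simp add: Box_def \<beta>_def k_def mult.assoc)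
qed


lemma hF_zero: "hF b P 0 = 1"
proof -
  interpret prob_space "SP P" by (intro prob_space_PiM prob_space_measure_pmf)
  show ?thesis by (simp add: hF_def dotr_def prob_space)
qed

lemma box_finite: "finite {\<xi>::int^'n::finite. \<forall>i. \<bar>of_int (\<xi>$i)\<bar> \<le> (Q::real)}"
proof (rule finite_subset)
  show "{\<xi>::int^'n. \<forall>i. \<bar>of_int (\<xi>$i)\<bar> \<le> Q} \<subseteq> {v. \<forall>i. v$i \<in> {-\<lceil>Q\<rceil>..\<lceil>Q\<rceil>}}"
  proof (safe)
    fix \<xi> :: "int^'n" and i assume h: "\<forall>i. \<bar>real_of_int (\<xi>$i)\<bar> \<le> Q"
    have "\<bar>real_of_int (\<xi>$i)\<bar> \<le> Q" using h by simp
    moreover have "Q \<le> real_of_int \<lceil>Q\<rceil>" by simp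
    ultimately have "real_of_int (\<xi>$i) \<le> real_of_int \<lceil>Q\<rceil>" "real_of_int (- \<lceil>Q\<rceil>) \<le> real_of_int (\<xi>$i)"
      by linarith+
    hence "\<xi>$i \<le> \<lceil>Q\<rceil>" "- \<lceil>Q\<rceil> \<le> \<xi>$i" by (simp_all only: of_int_le_iff)
    thus "\<xi>$i \<in> {-\<lceil>Q\<rceil>..\<lceil>Q\<rceil>}" by simp
  qed
  show "finite {v::int^'n. \<forall>i. v$i \<in> {-\<lceil>Q\<rceil>..\<lceil>Q\<rceil>}}" by (rule finite_vecset) simp
qed

lemma l1_bdd:
  fixes P :: "(nat^'n::finite) pmf"
  shows "bdd_above {s. s \<ge> 0 \<and> (\<exists>C. \<forall>Q::real. Q \<ge> 1 \<longrightarrow>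
      (\<Sum>\<xi>\<in>{\<xi>::int^'n. \<forall>i. \<bar>of_int (\<xi>$i)\<bar> \<le> Q}. norm (fourier_coeff (missing_digit_measure b P) \<xi>))
        \<le> C * Q powr (real CARD('n) - s))}"
proof (rule bdd_aboveI)
  fix s assume "s \<in> {s. s \<ge> 0 \<and> (\<exists>C. \<forall>Q::real. Q \<ge> 1 \<longrightarrow>
      (\<Sum>\<xi>\<in>{\<xi>::int^'n. \<forall>i. \<bar>of_int (\<xi>$i)\<bar> \<le> Q}. norm (fourier_coeff (missing_digit_measure b P) \<xi>))
        \<le> C * Q powr (real CARD('n) - s))}"
  then obtain C where C: "\<And>Q::real. Q \<ge> 1 \<Longrightarrow>
      (\<Sum>\<xi>\<in>{\<xi>::int^'n. \<forall>i. \<bar>of_int (\<xi>$i)\<bar> \<le> Q}. norm (fourier_coeff (missing_digit_measure b P) \<xi>))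
        \<le> C * Q powr (real CARD('n) - s)" by auto
  have one: "1 \<le> C * Q powr (real CARD('n) - s)" if Q: "Q \<ge> 1" for Q :: real
  proof -
    have "1 = norm (fourier_coeff (missing_digit_measure b P) 0)"
    proof -
      have "(\<chi> i. real_of_int ((0::int^'n)$i)) = (0::real^'n)" by (simp add: vec_eq_iff)
      thus ?thesis by (simp add: fourier_hF hF_zero)
    qed
    also have "\<dots> \<le> (\<Sum>\<xi>\<in>{\<xi>::int^'n. \<forall>i. \<bar>of_int (\<xi>$i)\<bar> \<le> Q}. norm (fourier_coeff (missing_digit_measure b P) \<xi>))"
      by (rule member_le_sum) (use Q in \<open>auto intro: box_finite\<close>)
    also have "\<dots> \<le> C * Q powr (real CARD('n) - s)" by (rule C[OF Q])
    finally show ?thesis .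
  qed
  show "s \<le> real CARD('n)"
  proof (rule ccontr)
    assume "\<not> s \<le> real CARD('n)"
    hence sk: "s - real CARD('n) > 0" by simp
    have C1: "C \<ge> 1" using one[of 1] by simp
    define Q where "Q = (C + 1) powr (1 / (s - real CARD('n)))"
    have Q1: "Q \<ge> 1" unfolding Q_def using C1 sk by (intro ge_one_powr_ge_zero) auto
    have "Q powr (real CARD('n) - s) = (C + 1) powr ((1 / (s - real CARD('n))) * (real CARD('n) - s))"
      unfolding Q_def by (simp add: powr_powr)
    also have "(1 / (s - real CARD('n))) * (real CARD('n) - s) = -1" using sk by (simp add: field_simps)
    finally have "Q powr (real CARD('n) - s) = 1 / (C + 1)" using C1 by (simp add: powr_minus divide_inverse)
    hence "1 \<le> C / (C + 1)" using one[OF Q1] by simp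
    thus False using C1 by (simp add: field_simps)
  qed
qed

lemma main_L:
  fixes P :: "(nat^'n::finite) pmf" and b L :: nat
  assumes b: "b \<ge> 2" and sub: "set_pmf P \<subseteq> digits b" and L: "L \<ge> 1"
  defines "\<sigma> \<equiv> (SUP x::real^'n. real b powr (- (real CARD('n) * real L)) *
             (\<Sum>i\<in>digits (b ^ L). S_fun b P L (x + (1 / real b ^ L) *\<^sub>R (\<chi> j. real (i$j)))))"
  shows "l1_dim (missing_digit_measure b P) \<ge> - ln \<sigma> / ln (real b ^ L) \<and> - ln \<sigma> / ln (real b ^ L) \<ge> 0"
proof -
  define k where "k = CARD('n)"
  define A where "A = (\<lambda>x::real^'n. \<Sum>i\<in>digits (b ^ L). S_fun b P L (x + (1 / real b ^ L) *\<^sub>R vr i))"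
  define W where "W = real b powr (- (real CARD('n) * real L))"
  define Kc where "Kc = (real b ^ L) ^ CARD('n)"
  have \<sigma>A: "\<sigma> = (SUP x. W * A x)" unfolding \<sigma>_def W_def A_def vr_def ..
  have Kc0: "Kc > 0" using b by (simp add: Kc_def)
  have WK: "W * Kc = 1"
  proof -
    have "W = inverse (real b powr (real (CARD('n) * L)))" unfolding W_def
      by (simp add: powr_minus)
    also have "real b powr (real (CARD('n) * L)) = real b ^ (CARD('n) * L)"
      using b by (subst powr_realpow) auto
    also have "real b ^ (CARD('n) * L) = Kc" unfolding Kc_def
      by (simp add: power_mult[symmetric] mult.commute)
    finally show ?thesis using Kc0 by simp
  qed
  have W0: "W > 0" unfolding W_def using b by simp
  have AK: "A x \<le> Kc" for x
  proof -
    have "A x \<le> (\<Sum>i\<in>(digits (b ^ L) :: (nat^'n) set). (1::real))" unfolding A_def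
      by (intro sum_mono S_le1[OF sub])
    also have "\<dots> = Kc" by (simp add: card_digits Kc_def)
    finally show ?thesis .
  qed
  have WA1: "W * A x \<le> 1" for x
  proof -
    have "W * A x \<le> W * Kc" using AK[of x] W0 by (intro mult_left_mono) auto
    thus ?thesis using WK by simp
  qed
  have bdd: "bdd_above (range (\<lambda>x. W * A x))"
    by (rule bdd_aboveI2) (rule WA1)
  have \<sigma>1: "\<sigma> \<le> 1" unfolding \<sigma>A
    by (rule cSUP_least) (auto intro: WA1)
  have A01: "A 0 \<ge> 1"
  proof -
    have z: "(0::nat^'n) \<in> digits (b^L)" using b by (simp add: digits_def)
    have "S_fun b P L (0 + (1 / real b ^ L) *\<^sub>R vr (0::nat^'n)) = 1"
      by (simp add: vr_def S_zero[OF sub] vec_eq_iff zero_vec_def[symmetric])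
    moreover have "S_fun b P L (0 + (1 / real b ^ L) *\<^sub>R vr (0::nat^'n)) \<le> A 0"
      unfolding A_def by (rule member_le_sum[OF z]) (auto simp: S_nonneg finite_digits)
    ultimately show ?thesis by simp
  qed
  have \<sigma>0: "\<sigma> > 0"
  proof -
    have "W * A 0 \<le> \<sigma>" unfolding \<sigma>A by (rule cSUP_upper[OF _ bdd]) simp
    moreover have "W * 1 \<le> W * A 0" using W0 A01 by (intro mult_left_mono) auto
    ultimately show ?thesis using W0 by linarith
  qed
  have A\<sigma>: "A y \<le> Kc * \<sigma>" for y
  proof -
    have "W * A y \<le> \<sigma>" unfolding \<sigma>A by (rule cSUP_upper[OF _ bdd]) simp
    hence "Kc * (W * A y) \<le> Kc * \<sigma>" using Kc0 by simp
    moreover have "Kc * (W * A y) = A y" using WK by (simp add: mult.assoc[symmetric] mult.commute)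
    ultimately show ?thesis by simp
  qed
  define s where "s = - ln \<sigma> / ln (real b ^ L)"
  have lnb: "ln (real b ^ L) > 0" using b L by (simp add: ln_gt_zero_iff)
  have s0: "s \<ge> 0" unfolding s_def using \<sigma>0 \<sigma>1 lnb by (simp add: divide_nonpos_pos)
  have mem: "s \<in> {s. s \<ge> 0 \<and> (\<exists>C. \<forall>Q::real. Q \<ge> 1 \<longrightarrow>
      (\<Sum>\<xi>\<in>{\<xi>::int^'n. \<forall>i. \<bar>of_int (\<xi>$i)\<bar> \<le> Q}. norm (fourier_coeff (missing_digit_measure b P) \<xi>))
        \<le> C * Q powr (real CARD('n) - s))}"
    using fourier_sum_bound[OF b sub L \<sigma>0 A\<sigma>[unfolded A_def Kc_def] _ s0 s_def] s0 by blast
  have "s \<le> l1_dim (missing_digit_measure b P)"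
    unfolding l1_dim_def by (rule cSup_upper[OF mem l1_bdd])
  thus ?thesis using s0 unfolding s_def by simp
qed

theorem theoremA2:
  fixes P :: "(nat^'n::finite) pmf" and b L :: nat
  assumes "b \<ge> 2" and "set_pmf P \<subseteq> digits b"
  shows "l1_dim (missing_digit_measure b P) \<ge>
    - ln (SUP x::real^'n. real b powr (- (real CARD('n) * real L)) *
             (\<Sum>i\<in>digits (b ^ L). S_fun b P L (x + (1 / real b ^ L) *\<^sub>R (\<chi> j. real (i$j)))))
    / ln (real b ^ L)"
proof (cases "L = 0")
  case True
  have "l1_dim (missing_digit_measure b P) \<ge> 0"
    using main_L[OF assms, of 1] by linarith
  thus ?thesis using True by simp
next
  case False
  then show ?thesis using main_L[OF assms, of L] by simp
qed


end
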